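(* Let $N>0$, $\gamma>0$, $\mathcal{R}_0>0$, and let $(S,I,R):[0,\infty)\to\mathbb{R}^3$ be the solution of $$S'=-\frac{\gamma\mathcal{R}_0 SI}{N},\qquad I'=\frac{\gamma\mathcal{R}_0 SI}{N}-\gamma I,\qquad R'=\gamma I,$$ with initial data $S(0)>0$, $I(0)>0$, $R(0)\ge 0$, $S(0)+I(0)+R(0)=N$. Let $I_{\max}=\sup_{t\ge0}I(t)$, and let $M$ be a real number with $I(0)<M<S(0)+I(0)$. Suppose $\mathcal{R}_0\ge \frac{N}{S(0)}$. Then $I_{\max}\le M$ if and only if $$\mathcal{R}_0\le N\,\frac{W_{-1}\!\left(\frac{M-N+R(0)}{S(0)\,e}\right)}{M-N+R(0)}.$$
   Context: SIR epidemic model written with basic reproduction number $\mathcal{R}_0=\beta N/\gamma$; along solutions $S+I+R\equiv N$. $I_{\max}$ denotes the maximum (supremum) of $I(t)$ over $t\ge0$. $W_{-1}$ is the lower real branch of the Lambert $W$ function: for $x\in[-1/e,0)$, $W_{-1}(x)$ is the unique real $y\le -1$ with $ye^y=x$. (Under the hypotheses, $M-N+R(0)<0$ and the argument of $W_{-1}$ lies in $(-1/e,0)$.) *)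

theory Defs
  imports "HOL-Analysis.Analysis"
begin

text \<open>Lower real branch of the Lambert W function: for x in [-1/e, 0),
  the unique real y \<le> -1 with y * exp y = x.\<close>
definition lambertW_m1 :: "real \<Rightarrow> real" where
  "lambertW_m1 x = (THE y. y \<le> -1 \<and> y * exp y = x)"

end

theory Submission
  imports Defs
begin


lemma cont0:
  fixes g g' :: "real \<Rightarrow> real"
  assumes d: "\<And>t. t \<ge> 0 \<Longrightarrow> (g has_real_derivative g' t) (at t within {0..})"
  shows "continuous_on {0..} g"
  unfolding continuous_on_eq_continuous_within using d DERIV_continuous by blast

lemma mvt0:
  fixes g g' :: "real \<Rightarrow> real"
  assumes d: "\<And>t. t \<ge> 0 \<Longrightarrow> (g has_real_derivative g' t) (at t within {0..})"
    and ab: "0 \<le> a" "a < b"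
  shows "\<exists>z. a < z \<and> z < b \<and> g b - g a = (b - a) * g' z"
proof -
  have "continuous_on {a..b} g"
    by (rule continuous_on_subset[OF cont0[OF d]]) (use ab in auto)
  moreover have da: "(g has_real_derivative g' x) (at x)" if "a < x" for x
  proof -
    have "(g has_real_derivative g' x) (at x within {0..})" using d that ab by auto
    moreover have "at x within {0..} = at x"
      by (rule at_within_interior) (use ab that in \<open>auto simp: interior_real_atLeast\<close>)
    ultimately show ?thesis by simp
  qed
  ultimately obtain l z where z: "a < z" "z < b" "(g has_real_derivative l) (at z)"
     "g b - g a = (b - a) * l"
    using MVT[OF ab(2)] real_differentiable_def by (metis da)
  have "l = g' z" using DERIV_unique[OF z(3) da[OF z(1)]] .
  thus ?thesis using z by blast
qed

lemma const0:
  fixes g :: "real \<Rightarrow> real"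
  assumes d: "\<And>t. t \<ge> 0 \<Longrightarrow> (g has_real_derivative 0) (at t within {0..})"
    and t: "t \<ge> 0"
  shows "g t = g 0"
proof (cases "t = 0")
  case False
  then obtain z where "g t - g 0 = (t - 0) * 0" using mvt0[of g "\<lambda>_. 0" 0 t] d t by force
  thus ?thesis by simp
qed simp

lemma h_deriv: "((\<lambda>y. y * exp y) has_real_derivative (1 + x) * exp x) (at x)"
  by (auto intro!: derivative_eq_intros simp: algebra_simps)

lemma h_strict:
  fixes a b :: real
  assumes "a < b" "b \<le> -1"
  shows "b * exp b < a * exp a"
proof -
  obtain z where z: "a < z" "z < b" "b * exp b - a * exp a = (b - a) * ((1 + z) * exp z)"
    using MVT2[OF assms(1), of "\<lambda>y. y * exp y" "\<lambda>x. (1 + x) * exp x"] h_deriv by blast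
  have "(1 + z) * exp z < 0" using z assms by (simp add: mult_neg_pos)
  hence "(b - a) * ((1 + z) * exp z) < 0" using assms by (simp add: mult_pos_neg)
  thus ?thesis using z by linarith
qed

lemma W_props:
  fixes x :: real
  assumes x1: "-1 / exp 1 < x" and x0: "x < 0"
  shows "lambertW_m1 x \<le> -1 \<and> lambertW_m1 x * exp (lambertW_m1 x) = x"
proof -
  define y0 where "y0 = min (-1) (4 / x)"
  define z where "z = - y0"
  have z1: "z \<ge> 1" and z2: "z \<ge> -4 / x" unfolding z_def y0_def by auto
  have "exp (z/2) \<ge> 1 + z/2" by (rule exp_ge_add_one_self)
  hence "exp (z/2) * exp (z/2) \<ge> (1 + z/2) * (1 + z/2)"
    using z1 by (intro mult_mono) auto
  hence ez: "exp z \<ge> (1 + z/2) * (1 + z/2)" by (simp flip: exp_add)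
  have "(1 + z/2) * (1 + z/2) = 1 + z + z * z / 4" by (simp add: field_simps)
  hence "(1 + z/2) * (1 + z/2) \<ge> z * z / 4" using z1 by linarith
  hence ez2: "exp z \<ge> z * z / 4" using ez by linarith
  have "-x * z / 4 \<ge> 1" using z2 x0 by (simp add: field_simps)
  hence "-x * exp z \<ge> -x * (z * z / 4)" using ez2 x0 by (intro mult_left_mono) auto
  also have "-x * (z * z / 4) = z * (-x * z / 4)" by simp
  also have "\<dots> \<ge> z * 1" using \<open>-x * z / 4 \<ge> 1\<close> z1 by (intro mult_left_mono) auto
  finally have "z \<le> -x * exp z" by simp
  hence "z * exp (-z) \<le> -x" by (simp add: exp_minus field_simps)
  hence hy0: "x \<le> y0 * exp y0" unfolding z_def by simp
  have y0le: "y0 \<le> -1" unfolding y0_def by simp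
  have hm1: "(-1) * exp (-1::real) \<le> x" using x1 by (simp add: exp_minus field_simps)
  have "continuous_on {y0..-1} (\<lambda>y::real. y * exp y)" by (intro continuous_intros)
  then obtain w where w: "w \<ge> y0" "w \<le> -1" "w * exp w = x"
    using IVT2'[of "\<lambda>y. y * exp y" "-1" x y0] hy0 hm1 y0le by blast
  have uniq: "v = w" if "v \<le> -1" "v * exp v = x" for v
  proof (rule ccontr)
    assume "v \<noteq> w"
    then consider "v < w" | "w < v" by linarith
    thus False
    proof cases
      case 1 thus False using h_strict[of v w] that w by linarith
    next
      case 2 thus False using h_strict[of w v] that w by linarith
    qed
  qed
  have "lambertW_m1 x = w" unfolding lambertW_m1_def
    by (rule the_equality) (use w uniq in blast)+
  thus ?thesis using w by simp
qed

lemma W_le: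
  fixes x y :: real
  assumes x1: "-1 / exp 1 < x" and x0: "x < 0" and y: "y \<le> -1"
  shows "y * exp y \<le> x \<longleftrightarrow> lambertW_m1 x \<le> y"
proof -
  define w where "w = lambertW_m1 x"
  have w: "w \<le> -1" "w * exp w = x" using W_props[OF x1 x0] unfolding w_def by auto
  show ?thesis unfolding w_def[symmetric]
  proof
    assume "y * exp y \<le> x"
    show "w \<le> y"
    proof (rule ccontr)
      assume "\<not> w \<le> y"
      hence "w * exp w < y * exp y" using h_strict[of y w] w by auto
      thus False using w \<open>y * exp y \<le> x\<close> by linarith
    qed
  next
    assume "w \<le> y"
    show "y * exp y \<le> x"
    proof (cases "w = y")
      case False
      hence "y * exp y < w * exp w" using h_strict[of w y] \<open>w \<le> y\<close> y by auto
      thus ?thesis using w by linarith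
    qed (use w in simp)
  qed
qed


theorem proposition2:
  fixes S I R :: "real \<Rightarrow> real" and N \<gamma> R\<^sub>0 M :: real
  assumes N_pos: "N > 0" and gamma_pos: "\<gamma> > 0" and R0_pos: "R\<^sub>0 > 0"
    and dS: "\<And>t. t \<ge> 0 \<Longrightarrow>
      (S has_real_derivative (- \<gamma> * R\<^sub>0 * S t * I t / N)) (at t within {0..})"
    and dI: "\<And>t. t \<ge> 0 \<Longrightarrow>
      (I has_real_derivative (\<gamma> * R\<^sub>0 * S t * I t / N - \<gamma> * I t)) (at t within {0..})"
    and dR: "\<And>t. t \<ge> 0 \<Longrightarrow>
      (R has_real_derivative (\<gamma> * I t)) (at t within {0..})"
    and S0: "S 0 > 0" and I0: "I 0 > 0" and R0: "R 0 \<ge> 0"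
    and sum0: "S 0 + I 0 + R 0 = N"
    and M_bounds: "I 0 < M" "M < S 0 + I 0"
    and R0_ge: "R\<^sub>0 \<ge> N / S 0"
  shows "(Sup (I ` {0..}) \<le> M) \<longleftrightarrow>
    R\<^sub>0 \<le> N * lambertW_m1 ((M - N + R 0) / (S 0 * exp 1)) / (M - N + R 0)"
proof -
  have cS: "continuous_on {0..} S" using cont0[OF dS] .
  have cI: "continuous_on {0..} I" using cont0[OF dI] .
  have cons: "S t + I t + R t = N" if "t \<ge> 0" for t
  proof -
    have "(\<lambda>t. S t + I t + R t) t = (\<lambda>t. S t + I t + R t) 0"
    proof (rule const0[OF _ that])
      fix s :: real assume s: "s \<ge> 0"
      have "((\<lambda>t. S t + I t + R t) has_real_derivative
         (- \<gamma> * R\<^sub>0 * S s * I s / N + (\<gamma> * R\<^sub>0 * S s * I s / N - \<gamma> * I s) + \<gamma> * I s))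
         (at s within {0..})"
        by (intro DERIV_add dS dI dR s)
      thus "((\<lambda>t. S t + I t + R t) has_real_derivative 0) (at s within {0..})" by simp
    qed
    thus ?thesis using sum0 by simp
  qed
  define c where "c = R\<^sub>0 / N"
  have c_pos: "c > 0" unfolding c_def using R0_pos N_pos by simp
  have Sexp: "S t * exp (c * R t) = S 0 * exp (c * R 0)" if "t \<ge> 0" for t
  proof -
    have "(\<lambda>t. S t * exp (c * R t)) t = (\<lambda>t. S t * exp (c * R t)) 0"
    proof (rule const0[OF _ that])
      fix s :: real assume s: "s \<ge> 0"
      show "((\<lambda>t. S t * exp (c * R t)) has_real_derivative 0) (at s within {0..})"
        using dS[OF s] dR[OF s] N_pos by (auto intro!: derivative_eq_intros simp: c_def field_simps)
    qed
    thus ?thesis by simp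
  qed
  have Spos: "S t > 0" if "t \<ge> 0" for t
  proof -
    have "S t * exp (c * R t) > 0" using Sexp[OF that] S0 by simp
    thus ?thesis by (simp add: zero_less_mult_iff)
  qed
  have lnS: "ln (S t / S 0) = c * (R 0 - R t)" if "t \<ge> 0" for t
  proof -
    have "S t = S 0 * exp (c * R 0) / exp (c * R t)" using Sexp[OF that] by (simp add: field_simps)
    hence "S t / S 0 = exp (c * (R 0 - R t))" using S0 by (simp add: exp_diff right_diff_distrib)
    thus ?thesis by simp
  qed
  define u where "u = N / R\<^sub>0"
  define f where "f x = N - x - R 0 + u * ln (x / S 0)" for x
  have u_pos: "u > 0" unfolding u_def using N_pos R0_pos by simp
  have u_le: "u \<le> S 0"
  proof -
    have "N \<le> R\<^sub>0 * S 0" using R0_ge S0 by (simp add: field_simps)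
    thus ?thesis unfolding u_def using R0_pos by (simp add: field_simps)
  qed
  have Ieq: "I t = f (S t)" if "t \<ge> 0" for t
  proof -
    have "u * ln (S t / S 0) = u * c * (R 0 - R t)" using lnS[OF that] by simp
    also have "u * c = 1" unfolding u_def c_def using N_pos R0_pos by simp
    finally have "u * ln (S t / S 0) = R 0 - R t" by simp
    thus ?thesis using cons[OF that] unfolding f_def by linarith
  qed
  have fS0: "f (S 0) = I 0" unfolding f_def using sum0 S0 by simp
  have fmax: "f x \<le> f u" if "x > 0" for x
  proof -
    have "ln (x / S 0) - ln (u / S 0) = ln (x / u)"
      using that u_pos S0 by (simp add: ln_div)
    moreover have "ln (x / u) \<le> x / u - 1" using that u_pos by (intro ln_le_minus_one) simp
    hence "u * ln (x / u) \<le> u * (x / u - 1)" using u_pos by (intro mult_left_mono) auto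
    moreover have "u * (x / u - 1) = x - u" using u_pos by (simp add: field_simps)
    ultimately have "u * ln (x / S 0) - u * ln (u / S 0) \<le> x - u"
      by (simp add: right_diff_distrib[symmetric])
    thus ?thesis unfolding f_def by linarith
  qed
  have fmono: "f y \<le> f x" if "u \<le> x" "x \<le> y" for x y
  proof -
    have xp: "x > 0" using that u_pos by linarith
    have "ln (y / S 0) - ln (x / S 0) = ln (y / x)"
      using that xp S0 by (simp add: ln_div)
    moreover have "ln (y / x) \<le> y / x - 1" using that xp by (intro ln_le_minus_one) simp
    hence "u * ln (y / x) \<le> u * (y / x - 1)" using u_pos by (intro mult_left_mono) auto
    moreover have "u * (y / x - 1) = (y - x) * (u / x)" using xp by (simp add: field_simps)
    moreover have "(y - x) * (u / x) \<le> (y - x) * 1"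
      using that xp by (intro mult_left_mono) auto
    ultimately have "u * ln (y / S 0) - u * ln (x / S 0) \<le> y - x"
      by (simp add: right_diff_distrib[symmetric])
    thus ?thesis unfolding f_def by linarith
  qed
  have reach: "\<exists>ts\<ge>0. S ts = u"
  proof (rule ccontr)
    assume nr: "\<not> (\<exists>ts\<ge>0. S ts = u)"
    have gt: "S t > u" if t: "t \<ge> 0" for t
    proof (rule ccontr)
      assume "\<not> S t > u"
      hence "S t \<le> u" by simp
      moreover have "continuous_on {0..t} S" by (rule continuous_on_subset[OF cS]) auto
      ultimately obtain z where "z \<ge> 0" "z \<le> t" "S z = u"
        using IVT2'[of S t u 0] u_le t by auto
      thus False using nr by auto
    qed
    have Ipos: "I t > 0" if t: "t \<ge> 0" for t
    proof (rule ccontr)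
      assume nI: "\<not> I t > 0"
      define A where "A = {0..t} \<inter> I -` {..0}"
      have cA: "closed A" unfolding A_def
        by (rule continuous_closed_preimage) (auto intro: continuous_on_subset[OF cI])
      have tA: "t \<in> A" unfolding A_def using t nI by auto
      have bA: "bdd_below A" unfolding A_def by (rule bdd_belowI[of _ 0]) auto
      define t0 where "t0 = Inf A"
      have t0A: "t0 \<in> A" unfolding t0_def using closed_contains_Inf[OF _ bA cA] tA by auto
      hence t0: "0 \<le> t0" "I t0 \<le> 0" unfolding A_def by auto
      have t0ne: "t0 \<noteq> 0" using t0 I0 by auto
      have Ibefore: "I s > 0" if "0 \<le> s" "s < t0" for s
      proof (rule ccontr)
        assume "\<not> I s > 0"
        hence "s \<in> A" unfolding A_def using that t0A A_def by auto
        hence "t0 \<le> s" unfolding t0_def using bA by (simp add: cInf_lower)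
        thus False using that by simp
      qed
      obtain z where z: "0 < z" "z < t0"
        "S t0 - S 0 = (t0 - 0) * (- \<gamma> * R\<^sub>0 * S z * I z / N)"
        using mvt0[OF dS, of 0 t0] t0 t0ne by auto
      have "\<gamma> * R\<^sub>0 * S z * I z / N > 0"
        using gamma_pos R0_pos Spos[of z] Ibefore[of z] z N_pos by simp
      hence "t0 * (\<gamma> * R\<^sub>0 * S z * I z / N) > 0" using z by (intro mult_pos_pos) auto
      moreover have "(t0 - 0) * (- \<gamma> * R\<^sub>0 * S z * I z / N) = - (t0 * (\<gamma> * R\<^sub>0 * S z * I z / N))"
        by (simp add: algebra_simps)
      ultimately have "S t0 < S 0" using z(3) by linarith
      hence "f (S 0) \<le> f (S t0)" using fmono[of "S t0" "S 0"] gt[OF t0(1)] by simp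
      thus False using Ieq[OF t0(1)] fS0 I0 t0 by linarith
    qed
    have Sle: "S t \<le> S 0" if t: "t \<ge> 0" for t
    proof (cases "t = 0")
      case False
      then obtain z where z: "0 < z" "z < t"
        "S t - S 0 = (t - 0) * (- \<gamma> * R\<^sub>0 * S z * I z / N)"
        using mvt0[OF dS, of 0 t] t by auto
      have "\<gamma> * R\<^sub>0 * S z * I z / N > 0"
        using gamma_pos R0_pos Spos[of z] Ipos[of z] z N_pos by simp
      hence "t * (\<gamma> * R\<^sub>0 * S z * I z / N) > 0" using z by (intro mult_pos_pos) auto
      moreover have "(t - 0) * (- \<gamma> * R\<^sub>0 * S z * I z / N) = - (t * (\<gamma> * R\<^sub>0 * S z * I z / N))"
        by (simp add: algebra_simps)
      ultimately show ?thesis using z(3) by linarith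
    qed simp
    have Ige: "I t \<ge> I 0" if t: "t \<ge> 0" for t
      using fmono[of "S t" "S 0"] gt[OF t] Sle[OF t] Ieq[OF t] fS0 by simp
    define T where "T = (S 0 - u) / (\<gamma> * I 0)"
    have Su: "S 0 > u" using gt[of 0] by simp
    have Tpos: "T > 0" unfolding T_def using Su gamma_pos I0 by simp
    obtain z where z: "0 < z" "z < T"
        "S T - S 0 = (T - 0) * (- \<gamma> * R\<^sub>0 * S z * I z / N)"
      using mvt0[OF dS, of 0 T] Tpos by auto
    have "R\<^sub>0 * S z / N \<ge> 1"
    proof -
      have "S z > N / R\<^sub>0" using gt[of z] z unfolding u_def by simp
      hence "R\<^sub>0 * S z > N" using R0_pos by (simp add: field_simps)
      thus ?thesis using N_pos by simp
    qed
    hence "\<gamma> * I z * (R\<^sub>0 * S z / N) \<ge> \<gamma> * I z * 1"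
      using gamma_pos Ipos[of z] z by (intro mult_left_mono) auto
    moreover have "\<gamma> * I z \<ge> \<gamma> * I 0" using Ige[of z] z gamma_pos by simp
    ultimately have "\<gamma> * R\<^sub>0 * S z * I z / N \<ge> \<gamma> * I 0" by (simp add: algebra_simps)
    hence "T * (\<gamma> * R\<^sub>0 * S z * I z / N) \<ge> T * (\<gamma> * I 0)" using Tpos
      by (intro mult_left_mono) auto
    moreover have "T * (\<gamma> * I 0) = S 0 - u" unfolding T_def using gamma_pos I0 by simp
    ultimately have "S T \<le> u" using z by simp
    thus False using gt[of T] Tpos by simp
  qed
  then obtain ts where ts: "ts \<ge> 0" "S ts = u" by blast
  have Sup_eq: "Sup (I ` {0..}) = f u"
  proof (rule cSup_eq_maximum)
    show "f u \<in> I ` {0..}" using Ieq[OF ts(1)] ts by force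
    fix y assume "y \<in> I ` {0..}"
    then obtain t where "t \<ge> 0" "y = I t" by auto
    thus "y \<le> f u" using Ieq fmax Spos by simp
  qed
  define K where "K = M - N + R 0"
  have K_neg: "K < 0" unfolding K_def using M_bounds sum0 by simp
  have K_gt: "K > - S 0" unfolding K_def using M_bounds sum0 by simp
  define x where "x = K / (S 0 * exp 1)"
  have x0: "x < 0" unfolding x_def using K_neg S0 by (simp add: divide_neg_pos)
  have x1: "-1 / exp 1 < x" unfolding x_def using K_gt S0 by (simp add: field_simps)
  define w where "w = lambertW_m1 x"
  have w: "w \<le> -1" "w * exp w = x" using W_props[OF x1 x0] unfolding w_def by auto
  define y where "y = ln (u / S 0) - 1"
  have y: "y \<le> -1" unfolding y_def using u_le u_pos S0 by simp
  have ey: "exp y * exp 1 = u / S 0" unfolding y_def using u_pos S0 by (simp flip: exp_add)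
  have "f u \<le> M \<longleftrightarrow> u * y \<le> K" unfolding f_def y_def K_def by (simp add: algebra_simps)
  also have "u * y = (S 0 * exp 1) * (y * exp y)"
  proof -
    have "u = S 0 * (exp y * exp 1)" using ey S0 by simp
    thus ?thesis by (simp add: algebra_simps)
  qed
  also have "(S 0 * exp 1) * (y * exp y) \<le> K \<longleftrightarrow> y * exp y \<le> x"
    unfolding x_def using S0 by (simp add: pos_le_divide_eq mult.commute)
  also have "\<dots> \<longleftrightarrow> w \<le> y" unfolding w_def by (rule W_le[OF x1 x0 y])
  also have "\<dots> \<longleftrightarrow> exp (w + 1) \<le> u / S 0"
  proof -
    have q: "u / S 0 > 0" using u_pos S0 by simp
    have "exp (w + 1) \<le> u / S 0 \<longleftrightarrow> ln (exp (w + 1)) \<le> ln (u / S 0)"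
      using q by (simp only: ln_le_cancel_iff exp_gt_zero)
    thus ?thesis unfolding y_def by auto
  qed
  also have "\<dots> \<longleftrightarrow> R\<^sub>0 * (S 0 * exp 1 * exp w) \<le> N"
    unfolding u_def using S0 R0_pos by (simp add: exp_add field_simps)
  also have "\<dots> \<longleftrightarrow> R\<^sub>0 \<le> N * w / K"
  proof -
    have Kw: "S 0 * exp 1 * exp w * w = K" using w(2) S0 unfolding x_def by (simp add: field_simps)
    have "R\<^sub>0 \<le> N * w / K \<longleftrightarrow> N * w \<le> R\<^sub>0 * K" using K_neg by (simp add: neg_le_divide_eq)
    also have "\<dots> \<longleftrightarrow> N * w \<le> (R\<^sub>0 * (S 0 * exp 1 * exp w)) * w" unfolding Kw[symmetric] by (simp add: algebra_simps)
    also have "\<dots> \<longleftrightarrow> R\<^sub>0 * (S 0 * exp 1 * exp w) \<le> N" using w(1) by (simp add: mult_le_cancel_right)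
    finally show ?thesis by simp
  qed
  finally show ?thesis unfolding Sup_eq w_def x_def K_def .
qed

end
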